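(* Let $(\xi_n)_{n\geq1}$ be i.i.d. with $\mathbf{P}(\xi_1=1)=p=1-\mathbf{P}(\xi_1=-1)$, $p\in(0,1)$. For $x\geq1$ set $W_0:=x$, $B_1:=1$, $W_n:=W_{n-1}+\xi_nB_n$, $B_{n+1}:=B_n2^{\xi_n}$ for $n\geq1$, and $f(x,p):=\mathbf{P}(W_n\leq0\text{ for some }n)$. Define functions $f_n:\mathbb{R}\times(0,1)\to\mathbb{R}$ by $f_0(x,p):=\mathbf{1}_{(-\infty,2]}(x)$ and $$f_{n+1}(x,p)=p\,f_n\!\left(\tfrac{x+1}{2},p\right)+(1-p)\,f_n(2x-2,p),\qquad n\in\mathbb{N}.$$ Then for every $x>2$, $f_n(x,\cdot)\to f(x,\cdot)$ locally uniformly on $(0,1/2)$, and for every $p\in(0,1/2)$, $f_n(\cdot,p)\to f(\cdot,p)$ locally uniformly on $(2,\infty)$. In particular, $$f(x,p)=p\,f\!\left(\tfrac{x+1}{2},p\right)+(1-p)\,f(2x-2,p)\qquad\text{for all }(x,p)\in(2,\infty)\times(0,1/2).$$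
   Context: $f(x,p)$ is the ruin probability of a gambler with initial fortune $x$ who starts by betting $1$, doubles the bet after each win and halves it after each loss, winning each round independently with probability $p$. *)

theory Defs
  imports "HOL-Probability.Probability"
begin

text \<open>Probability space of the coin flips: \<omega> n = True means \<xi>_(n+1) = 1
  (probability p), False means \<xi>_(n+1) = -1.\<close>
definition coin_space :: "real \<Rightarrow> (nat \<Rightarrow> bool) measure" where
  "coin_space p = (\<Pi>\<^sub>M n\<in>(UNIV::nat set). measure_pmf (bernoulli_pmf p))"

definition xi :: "(nat \<Rightarrow> bool) \<Rightarrow> nat \<Rightarrow> real" where
  "xi \<omega> n = (if \<omega> n then 1 else -1)"

text \<open>wealth_bet x \<omega> n = (W_n, B_(n+1)), with W_0 = x, B_1 = 1.\<close>
fun wealth_bet :: "real \<Rightarrow> (nat \<Rightarrow> bool) \<Rightarrow> nat \<Rightarrow> real \<times> real" where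
  "wealth_bet x \<omega> 0 = (x, 1)"
| "wealth_bet x \<omega> (Suc n) =
     (let (w, b) = wealth_bet x \<omega> n; s = xi \<omega> n in (w + s * b, b * 2 powr s))"

definition W :: "real \<Rightarrow> (nat \<Rightarrow> bool) \<Rightarrow> nat \<Rightarrow> real" where
  "W x \<omega> n = fst (wealth_bet x \<omega> n)"

definition ruin_prob :: "real \<Rightarrow> real \<Rightarrow> real" where
  "ruin_prob x p = measure (coin_space p) {\<omega> \<in> space (coin_space p). \<exists>n. W x \<omega> n \<le> 0}"

fun f_approx :: "nat \<Rightarrow> real \<Rightarrow> real \<Rightarrow> real" where
  "f_approx 0 x p = (if x \<le> 2 then 1 else 0)"
| "f_approx (Suc n) x p = p * f_approx n ((x + 1) / 2) p + (1 - p) * f_approx n (2 * x - 2) p"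

definition locally_uniform_limit :: "real set \<Rightarrow> (nat \<Rightarrow> real \<Rightarrow> real) \<Rightarrow> (real \<Rightarrow> real) \<Rightarrow> bool" where
  "locally_uniform_limit U F g \<longleftrightarrow>
     (\<forall>K. compact K \<and> K \<subseteq> U \<longrightarrow> uniform_limit K F g sequentially)"

end

theory Submission
  imports Defs
begin

lemma coin_seq_space:
  assumes p: "0 \<le> p" "p \<le> 1"
  shows "sequence_space (measure_pmf (bernoulli_pmf p))"
  unfolding sequence_space_def product_prob_space_def product_prob_space_axioms_def
    product_sigma_finite_def
  by (auto simp: prob_space_measure_pmf prob_space_imp_sigma_finite)

lemma space_coin[simp]: "space (coin_space p) = UNIV"
  by (simp add: coin_space_def space_PiM)

lemma coin_step_e:
  assumes p: "0 \<le> p" "p \<le> 1" and A: "A \<in> sets (coin_space p)"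
  shows "emeasure (coin_space p) A =
     emeasure (coin_space p) {\<omega>. case_nat True \<omega> \<in> A} * p
   + emeasure (coin_space p) {\<omega>. case_nat False \<omega> \<in> A} * (1 - p)"
proof -
  interpret sequence_space "measure_pmf (bernoulli_pmf p)" by (rule coin_seq_space[OF p])
  have S: "coin_space p = S" by (simp add: coin_space_def)
  let ?F = "\<lambda>(s, \<omega>). case_nat s \<omega>"
  have A': "A \<in> sets S" using A S by simp
  have Fm: "?F \<in> measurable (measure_pmf (bernoulli_pmf p) \<Otimes>\<^sub>M S) S" by measurable
  have "emeasure S A = emeasure (distr (measure_pmf (bernoulli_pmf p) \<Otimes>\<^sub>M S) S ?F) A"
    by (simp add: PiM_iter)
  also have "\<dots> = emeasure (measure_pmf (bernoulli_pmf p) \<Otimes>\<^sub>M S) (?F -` A \<inter> space (measure_pmf (bernoulli_pmf p) \<Otimes>\<^sub>M S))"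
    by (rule emeasure_distr[OF Fm A'])
  also have "\<dots> = (\<integral>\<^sup>+s. emeasure S (Pair s -` (?F -` A \<inter> space (measure_pmf (bernoulli_pmf p) \<Otimes>\<^sub>M S))) \<partial>measure_pmf (bernoulli_pmf p))"
    by (rule P.emeasure_pair_measure_alt) (rule measurable_sets[OF Fm A'])
  also have "\<dots> = (\<integral>\<^sup>+s. emeasure S {\<omega>. case_nat s \<omega> \<in> A} \<partial>measure_pmf (bernoulli_pmf p))"
    by (intro nn_integral_cong arg_cong2[where f=emeasure]) (auto simp: space_pair_measure space_PiM)
  also have "\<dots> = emeasure S {\<omega>. case_nat True \<omega> \<in> A} * p + emeasure S {\<omega>. case_nat False \<omega> \<in> A} * (1 - p)"
    using p by (subst nn_integral_measure_pmf_support[of UNIV]) (auto simp: UNIV_bool)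
  finally show ?thesis using S by simp
qed

definition Bt :: "real \<Rightarrow> (nat \<Rightarrow> bool) \<Rightarrow> nat \<Rightarrow> real" where
  "Bt x \<omega> n = snd (wealth_bet x \<omega> n)"

lemma W_0[simp]: "W x \<omega> 0 = x" and Bt_0[simp]: "Bt x \<omega> 0 = 1"
  by (simp_all add: W_def Bt_def)

lemma W_Suc: "W x \<omega> (Suc n) = W x \<omega> n + xi \<omega> n * Bt x \<omega> n"
  and Bt_Suc: "Bt x \<omega> (Suc n) = Bt x \<omega> n * 2 powr xi \<omega> n"
  by (simp_all add: W_def Bt_def split_beta Let_def)

lemma xi_meas[measurable]: "(\<lambda>\<omega>. xi \<omega> n) \<in> borel_measurable (coin_space p)"
proof -
  have "(\<lambda>\<omega>. \<omega> n) \<in> measurable (coin_space p) (measure_pmf (bernoulli_pmf p))"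
    by (simp add: coin_space_def measurable_component_singleton)
  then have [measurable]: "Measurable.pred (coin_space p) (\<lambda>\<omega>. \<omega> n)"
    using measurable_cong_sets[OF refl sets_measure_pmf_count_space, of "coin_space p" "bernoulli_pmf p"] by simp
  show ?thesis unfolding xi_def by measurable
qed

lemma WB_meas: "(\<lambda>\<omega>. W x \<omega> n) \<in> borel_measurable (coin_space p) \<and> (\<lambda>\<omega>. Bt x \<omega> n) \<in> borel_measurable (coin_space p)"
proof (induction n)
  case 0 then show ?case by simp
next
  case (Suc n)
  then have [measurable]: "(\<lambda>\<omega>. W x \<omega> n) \<in> borel_measurable (coin_space p)"
     "(\<lambda>\<omega>. Bt x \<omega> n) \<in> borel_measurable (coin_space p)" by auto
  show ?case unfolding W_Suc Bt_Suc by measurable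
qed

lemma W_meas[measurable]: "(\<lambda>\<omega>. W x \<omega> n) \<in> borel_measurable (coin_space p)"
  using WB_meas by blast

lemma shift_True: "W x (case_nat True \<omega>) (Suc n) = 2 * W ((x+1)/2) \<omega> n \<and> Bt x (case_nat True \<omega>) (Suc n) = 2 * Bt ((x+1)/2) \<omega> n"
proof (induction n)
  case 0 then show ?case by (simp add: W_Suc Bt_Suc xi_def)
next
  case (Suc n) then show ?case
    by (simp add: W_Suc[of x _ "Suc n"] Bt_Suc[of x _ "Suc n"] W_Suc[of _ \<omega> n] Bt_Suc[of _ \<omega> n] xi_def algebra_simps)
qed

lemma shift_False: "W x (case_nat False \<omega>) (Suc n) = W (2*x-2) \<omega> n / 2 \<and> Bt x (case_nat False \<omega>) (Suc n) = Bt (2*x-2) \<omega> n / 2"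
proof (induction n)
  case 0 then show ?case by (simp add: W_Suc Bt_Suc xi_def powr_minus_divide)
next
  case (Suc n) then show ?case
    by (simp add: W_Suc[of x _ "Suc n"] Bt_Suc[of x _ "Suc n"] W_Suc[of _ \<omega> n] Bt_Suc[of _ \<omega> n] xi_def algebra_simps)
qed

definition Ev :: "nat \<Rightarrow> real \<Rightarrow> (nat \<Rightarrow> bool) set" where
  "Ev n x = {\<omega>. \<exists>k\<le>n. W x \<omega> k \<le> 0}"

lemma Ev_sets[measurable]: "Ev n x \<in> sets (coin_space p)"
proof -
  have "Ev n x = (\<Union>k\<in>{..n}. {\<omega> \<in> space (coin_space p). W x \<omega> k \<le> 0})"
    by (auto simp: Ev_def)
  also have "\<dots> \<in> sets (coin_space p)" by measurable
  finally show ?thesis .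
qed

lemma ex_le_Suc: "(\<exists>k\<le>Suc n. P k) = (P 0 \<or> (\<exists>k\<le>n. P (Suc k)))"
  by (metis Suc_le_mono le0 not0_implies_Suc)

lemma Ev_True: "x > 0 \<Longrightarrow> {\<omega>. case_nat True \<omega> \<in> Ev (Suc n) x} = Ev n ((x+1)/2)"
  unfolding Ev_def by (auto simp: ex_le_Suc shift_True mult_le_0_iff)

lemma Ev_False: "x > 0 \<Longrightarrow> {\<omega>. case_nat False \<omega> \<in> Ev (Suc n) x} = Ev n (2*x-2)"
  unfolding Ev_def by (auto simp: ex_le_Suc shift_False)

definition Gn :: "nat \<Rightarrow> real \<Rightarrow> real \<Rightarrow> real" where
  "Gn n x p = measure (coin_space p) (Ev n x)"

lemma prob_coin: "0 \<le> p \<Longrightarrow> p \<le> 1 \<Longrightarrow> prob_space (coin_space p)"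
proof -
  assume p: "0 \<le> p" "p \<le> 1"
  interpret sequence_space "measure_pmf (bernoulli_pmf p)" by (rule coin_seq_space[OF p])
  show ?thesis unfolding coin_space_def by (rule P.prob_space_axioms)
qed

lemma coin_step:
  assumes p: "0 \<le> p" "p \<le> 1" and A: "A \<in> sets (coin_space p)"
  shows "measure (coin_space p) A =
     p * measure (coin_space p) {\<omega>. case_nat True \<omega> \<in> A}
   + (1 - p) * measure (coin_space p) {\<omega>. case_nat False \<omega> \<in> A}"
proof -
  interpret prob_space "coin_space p" using prob_coin[OF p] .
  show ?thesis using coin_step_e[OF p A] p
    by (simp add: emeasure_eq_measure ennreal_mult'[symmetric] ennreal_plus[symmetric] del: ennreal_plus)
qed

lemma Gn_le0: "x \<le> 0 \<Longrightarrow> 0 \<le> p \<Longrightarrow> p \<le> 1 \<Longrightarrow> Gn n x p = 1"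
proof -
  assume "x \<le> 0" "0 \<le> p" "p \<le> 1"
  then interpret prob_space "coin_space p" using prob_coin by auto
  have "Ev n x = space (coin_space p)" using \<open>x \<le> 0\<close> by (auto simp: Ev_def intro: exI[of _ 0])
  then show ?thesis using prob_space by (simp add: Gn_def)
qed

lemma Gn_0: "x > 0 \<Longrightarrow> Gn 0 x p = 0"
  by (simp add: Gn_def Ev_def)

lemma Gn_Suc: "x > 0 \<Longrightarrow> 0 \<le> p \<Longrightarrow> p \<le> 1 \<Longrightarrow> Gn (Suc n) x p = p * Gn n ((x+1)/2) p + (1-p) * Gn n (2*x-2) p"
  unfolding Gn_def by (subst coin_step) (auto simp: Ev_True Ev_False)

lemma Gn_lim: "0 \<le> p \<Longrightarrow> p \<le> 1 \<Longrightarrow> (\<lambda>n. Gn n x p) \<longlonglongrightarrow> ruin_prob x p"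
proof -
  assume p: "0 \<le> p" "p \<le> 1"
  interpret prob_space "coin_space p" using prob_coin[OF p] .
  have "(\<lambda>n. measure (coin_space p) (Ev n x)) \<longlonglongrightarrow> measure (coin_space p) (\<Union>n. Ev n x)"
    apply (rule finite_Lim_measure_incseq)
    using Ev_sets apply blast
    by (auto simp: incseq_def Ev_def intro: le_trans)
  moreover have "(\<Union>n. Ev n x) = {\<omega> \<in> space (coin_space p). \<exists>n. W x \<omega> n \<le> 0}"
    by (auto simp: Ev_def)
  ultimately show ?thesis by (simp add: Gn_def ruin_prob_def)
qed

lemma Gn_bounds: "0 \<le> p \<Longrightarrow> p \<le> 1 \<Longrightarrow> 0 \<le> Gn n x p \<and> Gn n x p \<le> 1"
proof -
  assume p: "0 \<le> p" "p \<le> 1"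
  interpret prob_space "coin_space p" using prob_coin[OF p] .
  show ?thesis by (simp add: Gn_def)
qed

lemma fa_le2: "x \<le> 2 \<Longrightarrow> f_approx n x p = 1"
proof (induction n arbitrary: x)
  case 0 then show ?case by simp
next
  case (Suc n)
  have "(x+1)/2 \<le> 2" "2*x-2 \<le> 2" using Suc.prems by auto
  then show ?case using Suc.IH by (simp add: algebra_simps)
qed

lemma fa_bounds: "0 \<le> p \<Longrightarrow> p \<le> 1 \<Longrightarrow> 0 \<le> f_approx n x p \<and> f_approx n x p \<le> 1"
proof (induction n arbitrary: x)
  case 0 then show ?case by simp
next
  case (Suc n)
  have a: "0 \<le> f_approx n ((x+1)/2) p" "f_approx n ((x+1)/2) p \<le> 1"
    "0 \<le> f_approx n (2*x-2) p" "f_approx n (2*x-2) p \<le> 1" using Suc by auto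
  have "p * f_approx n ((x+1)/2) p \<le> p" using a Suc.prems by (simp add: mult_left_le)
  moreover have "(1-p) * f_approx n (2*x-2) p \<le> 1 - p" using a Suc.prems by (simp add: mult_left_le)
  ultimately show ?case using a Suc.prems by simp
qed

lemma fa_antimono: "0 \<le> p \<Longrightarrow> p \<le> 1 \<Longrightarrow> x \<le> y \<Longrightarrow> f_approx n y p \<le> f_approx n x p"
proof (induction n arbitrary: x y)
  case 0 then show ?case by simp
next
  case (Suc n)
  have "f_approx n ((y+1)/2) p \<le> f_approx n ((x+1)/2) p"
       "f_approx n (2*y-2) p \<le> f_approx n (2*x-2) p" using Suc by auto
  then show ?case using Suc.prems by (simp add: add_mono mult_left_mono)
qed

lemma fa_mono_n: "0 \<le> p \<Longrightarrow> p \<le> 1 \<Longrightarrow> f_approx n x p \<le> f_approx (Suc n) x p"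
proof (induction n arbitrary: x)
  case 0
  show ?case
  proof (cases "x \<le> 2")
    case True then show ?thesis using fa_le2[of x "Suc 0" p] by simp
  next
    case False then show ?thesis using fa_bounds[OF 0(1,2), of "Suc 0" x] by simp
  qed
next
  case (Suc n)
  have "f_approx n ((x+1)/2) p \<le> f_approx (Suc n) ((x+1)/2) p"
       "f_approx n (2*x-2) p \<le> f_approx (Suc n) (2*x-2) p" by (rule Suc.IH[OF Suc.prems])+
  then show ?case using Suc.prems
    by (simp only: f_approx.simps(2)[of "Suc n"] f_approx.simps(2)[of n]) (simp add: add_mono mult_left_mono)
qed

lemma fa_mono_n': "0 \<le> p \<Longrightarrow> p \<le> 1 \<Longrightarrow> m \<le> n \<Longrightarrow> f_approx m x p \<le> f_approx n x p"
  using lift_Suc_mono_le[of "\<lambda>n. f_approx n x p"] fa_mono_n by blast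

lemma fa_mono_p: "0 \<le> p \<Longrightarrow> p \<le> q \<Longrightarrow> q \<le> 1 \<Longrightarrow> f_approx n x p \<le> f_approx n x q"
proof (induction n arbitrary: x)
  case 0 then show ?case by simp
next
  case (Suc n)
  let ?A = "f_approx n ((x+1)/2)" and ?B = "f_approx n (2*x-2)"
  have AB: "?B p \<le> ?A p"
  proof (cases "x \<ge> 5/3")
    case True then show ?thesis using fa_antimono[of p "(x+1)/2" "2*x-2" n] Suc.prems by simp
  next
    case False then show ?thesis using fa_le2[of "(x+1)/2" n p] fa_le2[of "2*x-2" n p] by simp
  qed
  have "?A p \<le> ?A q" "?B p \<le> ?B q" using Suc by auto
  then have "q * ?A p + (1-q) * ?B p \<le> q * ?A q + (1-q) * ?B q"
    using Suc.prems by (intro add_mono mult_left_mono) auto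
  moreover have "p * ?A p + (1-p) * ?B p \<le> q * ?A p + (1-q) * ?B p"
  proof -
    have "0 \<le> (q - p) * (?A p - ?B p)" using AB Suc.prems by simp
    then show ?thesis by (simp add: algebra_simps)
  qed
  ultimately show ?case by simp
qed

lemma fa_cont_p: "continuous_on UNIV (\<lambda>p. f_approx n x p)"
proof (induction n arbitrary: x)
  case 0 then show ?case by simp
next
  case (Suc n)
  show ?case by (simp only: f_approx.simps) (intro continuous_intros Suc.IH)
qed

lemma Gn_le_fa: "0 \<le> p \<Longrightarrow> p \<le> 1 \<Longrightarrow> Gn n x p \<le> f_approx n x p"
proof (induction n arbitrary: x)
  case 0 then show ?case
    by (cases "x \<le> 0") (auto simp: Gn_le0 Gn_0)
next
  case (Suc n)
  show ?case
  proof (cases "x \<le> 0")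
    case True then show ?thesis using Suc.prems Gn_le0 fa_le2[of x] by simp
  next
    case False
    have "Gn n ((x+1)/2) p \<le> f_approx n ((x+1)/2) p" "Gn n (2*x-2) p \<le> f_approx n (2*x-2) p"
      using Suc by auto
    then show ?thesis using False Suc.prems
      by (simp add: Gn_Suc add_mono mult_left_mono)
  qed
qed

lemma rp_bounds: "0 \<le> p \<Longrightarrow> p \<le> 1 \<Longrightarrow> 0 \<le> ruin_prob x p \<and> ruin_prob x p \<le> 1"
proof -
  assume p: "0 \<le> p" "p \<le> 1"
  interpret prob_space "coin_space p" using prob_coin[OF p] .
  show ?thesis unfolding ruin_prob_def using measure_nonneg[of "coin_space p"] prob_le_1 by blast
qed

lemma rp_eq: "0 \<le> p \<Longrightarrow> p \<le> 1 \<Longrightarrow> x > 0 \<Longrightarrow>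
  ruin_prob x p = p * ruin_prob ((x+1)/2) p + (1-p) * ruin_prob (2*x-2) p"
proof -
  assume p: "0 \<le> p" "p \<le> 1" and x: "x > 0"
  have "(\<lambda>n. Gn (Suc n) x p) \<longlonglongrightarrow> ruin_prob x p"
    using Gn_lim[OF p] by (rule LIMSEQ_Suc)
  moreover have "(\<lambda>n. Gn (Suc n) x p) \<longlonglongrightarrow> p * ruin_prob ((x+1)/2) p + (1-p) * ruin_prob (2*x-2) p"
    unfolding Gn_Suc[OF x p] by (intro tendsto_intros Gn_lim[OF p])
  ultimately show ?thesis by (rule LIMSEQ_unique)
qed

lemma rp_le0: "0 \<le> p \<Longrightarrow> p \<le> 1 \<Longrightarrow> x \<le> 0 \<Longrightarrow> ruin_prob x p = 1"
proof -
  assume p: "0 \<le> p" "p \<le> 1" and x: "x \<le> 0"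
  have "(\<lambda>n. Gn n x p) \<longlonglongrightarrow> ruin_prob x p" using Gn_lim[OF p] .
  moreover have "(\<lambda>n. Gn n x p) = (\<lambda>n. 1)" using Gn_le0[OF x p] by simp
  moreover have "(\<lambda>n. (1::real)) \<longlonglongrightarrow> 1" by simp
  ultimately show ?thesis using LIMSEQ_unique by metis
qed

lemma rp_le2_step:
  fixes p M :: real
  assumes p: "0 < p" "p < 1" and M: "0 \<le> M"
    and hyp: "\<forall>y. 0 < y \<and> y \<le> 2 \<longrightarrow> 1 - ruin_prob y p \<le> M"
  shows "\<forall>y. 0 < y \<and> y \<le> 2 \<longrightarrow> 1 - ruin_prob y p \<le> (1 - p*(1-p)^2) * M"
proof -
  let ?u = "\<lambda>y. 1 - ruin_prob y p"
  have ueq: "?u y = p * ?u ((y+1)/2) + (1-p) * ?u (2*y-2)" if "y > 0" for y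
    using rp_eq[of p y] p that by (simp add: algebra_simps)
  have u0: "?u y = 0" if "y \<le> 0" for y using rp_le0[of p y] p that by simp
  have A: "?u y \<le> p * M" if "0 < y" "y \<le> 1" for y
  proof -
    have "?u ((y+1)/2) \<le> M" using hyp that by simp
    then show ?thesis using ueq[of y] u0[of "2*y-2"] that p by (simp add: mult_left_mono)
  qed
  have B: "?u z \<le> p * (2-p) * M" if "1 < z" "z \<le> 3/2" for z
  proof -
    have "?u ((z+1)/2) \<le> M" using hyp that by simp
    moreover have "?u (2*z-2) \<le> p * M" using A[of "2*z-2"] that by simp
    ultimately have "?u z \<le> p * M + (1-p) * (p * M)" using ueq[of z] that p
      by (simp add: add_mono mult_left_mono)
    then show ?thesis by (simp add: algebra_simps)
  qed
  have c1: "p * M \<le> (1 - p*(1-p)^2) * M"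
  proof -
    have "0 \<le> p*p" by simp
    then have "0 \<le> (1-p)*(1 - p + p^2)" using p by (intro mult_nonneg_nonneg) (auto simp: power2_eq_square)
    then have "p \<le> 1 - p*(1-p)^2" by (simp add: power2_eq_square algebra_simps)
    then show ?thesis using M by (simp add: mult_right_mono)
  qed
  have c2: "p * (2-p) * M \<le> (1 - p*(1-p)^2) * M"
  proof -
    have "0 \<le> (1-p)^3" using p by simp
    then have "p * (2-p) \<le> 1 - p*(1-p)^2" by (simp add: power3_eq_cube power2_eq_square algebra_simps)
    then show ?thesis using M by (simp add: mult_right_mono)
  qed
  show ?thesis
  proof (intro allI impI)
    fix y :: real assume y: "0 < y \<and> y \<le> 2"
    show "?u y \<le> (1 - p*(1-p)^2) * M"
    proof (cases "y \<le> 1")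
      case True then show ?thesis using A[of y] y c1 by simp
    next
      case False
      show ?thesis
      proof (cases "y \<le> 3/2")
        case True then show ?thesis using B[of y] False c2 by simp
      next
        case False2: False
        have "?u ((y+1)/2) \<le> p * (2-p) * M" using B[of "(y+1)/2"] y False2 by simp
        moreover have "?u (2*y-2) \<le> M" using hyp y False by simp
        ultimately have "?u y \<le> p * (p * (2-p) * M) + (1-p) * M" using ueq[of y] y p
          by (simp add: add_mono mult_left_mono)
        then show ?thesis by (simp add: power2_eq_square algebra_simps)
      qed
    qed
  qed
qed

lemma rp_le2: "0 < p \<Longrightarrow> p < 1 \<Longrightarrow> x \<le> 2 \<Longrightarrow> ruin_prob x p = 1"
proof -
  assume p: "0 < p" "p < 1" and x: "x \<le> 2"
  show ?thesis
  proof (cases "x \<le> 0")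
    case True then show ?thesis using rp_le0 p by simp
  next
    case False
    let ?c = "1 - p*(1-p)^2"
    have c0: "0 \<le> ?c"
    proof -
      have "p*(1-p)^2 \<le> 1 * 1" using p by (intro mult_mono) (auto simp: power_le_one)
      then show ?thesis by simp
    qed
    have c1: "?c < 1" using p by simp
    have k: "\<forall>y. 0 < y \<and> y \<le> 2 \<longrightarrow> 1 - ruin_prob y p \<le> ?c ^ k" for k
    proof (induction k)
      case 0 then show ?case using rp_bounds[of p] p by simp
    next
      case (Suc k)
      have "0 \<le> ?c ^ k" using c0 by simp
      from rp_le2_step[OF p this Suc.IH] show ?case unfolding power_Suc by (simp add: mult.commute)
    qed
    have "1 - ruin_prob x p \<le> 0"
    proof (rule ccontr)
      assume "\<not> 1 - ruin_prob x p \<le> 0"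
      then have "0 < 1 - ruin_prob x p" by simp
      from real_arch_pow_inv[OF this c1] obtain k where "?c ^ k < 1 - ruin_prob x p" by blast
      moreover have "1 - ruin_prob x p \<le> ?c ^ k" using k[of k] x False by simp
      ultimately show False by simp
    qed
    then show ?thesis using rp_bounds[of p x] p by simp
  qed
qed

lemma fa_le_rp: "0 < p \<Longrightarrow> p < 1 \<Longrightarrow> f_approx n x p \<le> ruin_prob x p"
proof (induction n arbitrary: x)
  case 0 then show ?case using rp_bounds[of p x] rp_le2[of p x] by auto
next
  case (Suc n)
  show ?case
  proof (cases "x \<le> 2")
    case True then show ?thesis using fa_le2 rp_le2 Suc.prems by simp
  next
    case False
    have "f_approx n ((x+1)/2) p \<le> ruin_prob ((x+1)/2) p" "f_approx n (2*x-2) p \<le> ruin_prob (2*x-2) p"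
      using Suc by auto
    then show ?thesis using rp_eq[of p x] Suc.prems False
      by (simp add: add_mono mult_left_mono)
  qed
qed

lemma fa_lim: "0 < p \<Longrightarrow> p < 1 \<Longrightarrow> (\<lambda>n. f_approx n x p) \<longlonglongrightarrow> ruin_prob x p"
proof -
  assume p: "0 < p" "p < 1"
  show ?thesis
  proof (rule tendsto_sandwich[of "\<lambda>n. Gn n x p" _ _ "\<lambda>n. ruin_prob x p"])
    show "\<forall>\<^sub>F n in sequentially. Gn n x p \<le> f_approx n x p" using Gn_le_fa p by simp
    show "\<forall>\<^sub>F n in sequentially. f_approx n x p \<le> ruin_prob x p" using fa_le_rp p by simp
    show "(\<lambda>n. Gn n x p) \<longlonglongrightarrow> ruin_prob x p" using Gn_lim p by simp
  qed simp
qed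

lemma rp_antimono: "0 < p \<Longrightarrow> p < 1 \<Longrightarrow> x \<le> y \<Longrightarrow> ruin_prob y p \<le> ruin_prob x p"
  using LIMSEQ_le[OF fa_lim fa_lim] fa_antimono by (metis less_eq_real_def)

lemma rp_mono_p: "0 < p \<Longrightarrow> p \<le> q \<Longrightarrow> q < 1 \<Longrightarrow> ruin_prob x p \<le> ruin_prob x q"
proof -
  assume a: "0 < p" "p \<le> q" "q < 1"
  show ?thesis
    by (rule LIMSEQ_le[OF fa_lim[of p] fa_lim[of q]]) (use a fa_mono_p in auto)
qed

lemma powr2_lower: "0 \<le> d \<Longrightarrow> 1 + d/2 \<le> 2 powr (d::real)"
proof -
  assume d: "0 \<le> d"
  have "1 + d * ln (2::real) \<le> exp (d * ln 2)" by (rule exp_ge_add_one_self)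
  moreover have "d * (1/2) \<le> d * ln 2" using ln2_ge_two_thirds d by (intro mult_left_mono) auto
  moreover have "2 powr d = exp (d * ln 2)" by (simp add: powr_def)
  ultimately show ?thesis by linarith
qed

lemma super_ineq:
  fixes l b mu :: real
  assumes l: "l > 1" and b: "0 < b" "b < 1" and mu: "mu > 0" and key: "l * ((1-b)*mu - b) \<ge> mu"
  shows "b/(l-1) + (1-b)/(l+mu) \<le> 1/l"
proof -
  have D: "l*(l-1)*(l+mu) > 0" using l mu by simp
  have "1/l - b/(l-1) - (1-b)/(l+mu) = ((l-1)*(l+mu) - b*l*(l+mu) - (1-b)*l*(l-1)) / (l*(l-1)*(l+mu))"
    using l mu by (simp add: field_simps)
  also have "(l-1)*(l+mu) - b*l*(l+mu) - (1-b)*l*(l-1) = l*((1-b)*mu - b) - mu"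
    by (simp add: algebra_simps)
  finally have "1/l - b/(l-1) - (1-b)/(l+mu) = (l*((1-b)*mu - b) - mu) / (l*(l-1)*(l+mu))" .
  moreover have "(l*((1-b)*mu - b) - mu) / (l*(l-1)*(l+mu)) \<ge> 0" using key D by simp
  ultimately show ?thesis by simp
qed

lemma rp_decay:
  fixes b :: real
  assumes b: "0 < b" "b < 1/2"
  shows "\<exists>X. \<forall>x. x > 2 \<longrightarrow> ruin_prob x b \<le> (if x \<le> X then 1 else log 2 (X-1) / log 2 (x-1)) \<and> X \<ge> 3"
proof -
  define d where "d = (1 - 2*b)/2"
  have d: "0 < d" "d \<le> 1/2" using b by (auto simp: d_def)
  define X where "X = 3 + max (2/d) (2 powr (1/d))"
  define K where "K = log 2 (X-1)"
  define psi where "psi x = (if x \<le> X then 1 else K / log 2 (x-1))" for x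
  have "2/d > 0" using d by simp
  then have X3: "X > 3" by (simp add: X_def less_max_iff_disj)
  have K1: "K > 1" using X3 by (simp add: K_def less_log_iff)
  have psi_le1: "psi x \<le> 1" for x
  proof (cases "x \<le> X")
    case False
    then have "K \<le> log 2 (x-1)" using X3 by (simp add: K_def)
    then show ?thesis using False K1 by (simp add: psi_def)
  qed (simp add: psi_def)
  have psi_nonneg: "psi x \<ge> 0" for x
  proof (cases "x \<le> X")
    case False
    then have "0 < log 2 (x-1)" using X3 log_less_cancel_iff[of 2 1 "x-1"] by simp
    then show ?thesis using False K1 by (simp add: psi_def)
  qed (simp add: psi_def)
  have psi_bound: "psi y \<le> K / log 2 (y-1)" if "y > 2" for y
  proof (cases "y \<le> X")
    case True
    have "0 < log 2 (y-1)" using that log_less_cancel_iff[of 2 1 "y-1"] by simp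
    moreover have "log 2 (y-1) \<le> K" using True that by (simp add: K_def)
    ultimately show ?thesis using True by (simp add: psi_def)
  qed (simp add: psi_def)
  have super: "b * psi ((x+1)/2) + (1-b) * psi (2*x-2) \<le> psi x" if "x > 0" for x
  proof (cases "x \<le> X")
    case True
    have "b * psi ((x+1)/2) + (1-b) * psi (2*x-2) \<le> b * 1 + (1-b) * 1"
      using b psi_le1 by (intro add_mono mult_left_mono) auto
    then show ?thesis using True by (simp add: psi_def)
  next
    case False
    define l where "l = log 2 (x-1)"
    have "X \<ge> 3 + 2/d" "X \<ge> 3 + 2 powr (1/d)" by (simp_all add: X_def)
    then have x1: "x - 1 \<ge> 2/d" "x - 1 \<ge> 2 powr (1/d)" "x > 3" using False X3 by linarith+
    have l1: "l > 1" using x1 by (simp add: l_def less_log_iff)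
    have ld: "l \<ge> 1/d" using x1 by (simp add: l_def le_log_iff)
    have g: "psi ((x+1)/2) \<le> K / (l - 1)"
    proof -
      have e: "(x+1)/2 - 1 = (x-1)/2" by simp
      have "log 2 ((x+1)/2 - 1) = l - 1" unfolding e using x1
        by (subst log_divide_pos) (auto simp: l_def)
      then show ?thesis using psi_bound[of "(x+1)/2"] x1 by simp
    qed
    have h: "psi (2*x-2) \<le> K / (l + (1-d))"
    proof -
      have "2 powr (1-d) \<le> 2 - d/2"
      proof -
        have "2 powr (1-d) = 2 / 2 powr d" by (simp add: powr_diff)
        also have "\<dots> \<le> 2 / (1 + d/2)" using powr2_lower[of d] d by (intro divide_left_mono) auto
        also have "\<dots> \<le> 2 - d/2" using d by (simp add: field_simps)
        finally show ?thesis .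
      qed
      also have "2 - d/2 \<le> (2*x-3)/(x-1)"
      proof -
        have "1/(x-1) \<le> d/2" using x1 d by (simp add: field_simps)
        moreover have "(2*x-3)/(x-1) = 2 - 1/(x-1)" using x1 by (simp add: field_simps)
        ultimately show ?thesis by simp
      qed
      finally have "1 - d \<le> log 2 ((2*x-3)/(x-1))" using x1 by (simp add: le_log_iff)
      also have "\<dots> = log 2 (2*x-2-1) - l" using x1 by (simp add: log_divide_pos l_def)
      finally have "l + (1-d) \<le> log 2 (2*x-2-1)" by simp
      moreover have "0 < l + (1-d)" using l1 d by simp
      moreover have "psi (2*x-2) \<le> K / log 2 (2*x-2-1)" using psi_bound[of "2*x-2"] x1 by simp
      ultimately have "K / log 2 (2*x-2-1) \<le> K / (l+(1-d))"
        using K1 by (intro divide_left_mono) auto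
      then show ?thesis using \<open>psi (2*x-2) \<le> K / log 2 (2*x-2-1)\<close> by linarith
    qed
    have key: "l * ((1-b)*(1-d) - b) \<ge> 1-d"
    proof -
      have i0: "(1-b)*(1-d) - b - d - b*d = 1 - 2*b - 2*d" by (simp add: algebra_simps)
      have "2*d = 1 - 2*b" by (simp add: d_def)
      then have i: "(1-b)*(1-d) - b - d = b*d" using i0 by linarith
      have "b*d \<ge> 0" using b d by simp
      then have "(1-b)*(1-d) - b \<ge> d" using i by linarith
      then have "l * ((1-b)*(1-d) - b) \<ge> l * d" using l1 by (simp add: mult_left_mono)
      moreover have "l * d \<ge> 1" using ld pos_divide_le_eq[OF d(1), of 1 l] by simp
      ultimately show ?thesis using d by simp
    qed
    have "b/(l-1) + (1-b)/(l+(1-d)) \<le> 1/l" by (rule super_ineq[OF l1 _ _ _ key]) (use b d in auto)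
    then have "K * (b/(l-1) + (1-b)/(l+(1-d))) \<le> K * (1/l)" using K1 by (intro mult_left_mono) auto
    then have "b * (K/(l-1)) + (1-b) * (K/(l+(1-d))) \<le> K / l" by (simp add: algebra_simps)
    moreover have "b * psi ((x+1)/2) + (1-b) * psi (2*x-2) \<le> b * (K/(l-1)) + (1-b) * (K/(l+(1-d)))"
      using g h b by (intro add_mono mult_left_mono) auto
    ultimately show ?thesis using False by (simp add: psi_def l_def)
  qed
  have Gpsi: "Gn n x b \<le> psi x" for n x
  proof (induction n arbitrary: x)
    case 0
    show ?case
    proof (cases "x \<le> 0")
      case True then show ?thesis using b X3 by (simp add: Gn_le0 psi_def)
    next
      case False then show ?thesis using psi_nonneg[of x] by (simp add: Gn_0)
    qed
  next
    case (Suc n)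
    show ?case
    proof (cases "x \<le> 0")
      case True then show ?thesis using b X3 by (simp add: Gn_le0 psi_def)
    next
      case False
      have "Gn (Suc n) x b = b * Gn n ((x+1)/2) b + (1-b) * Gn n (2*x-2) b" using False b by (simp add: Gn_Suc)
      also have "\<dots> \<le> b * psi ((x+1)/2) + (1-b) * psi (2*x-2)"
        using Suc.IH b by (intro add_mono mult_left_mono) auto
      also have "\<dots> \<le> psi x" using super False by simp
      finally show ?thesis .
    qed
  qed
  have "ruin_prob x b \<le> psi x" for x
    using Gn_lim[of b x] b Gpsi by (intro LIMSEQ_le_const2[of "\<lambda>n. Gn n x b"]) auto
  then have r: "ruin_prob x b \<le> (if x \<le> X then 1 else log 2 (X-1) / log 2 (x-1))" for x
    unfolding psi_def K_def by blast
  show ?thesis using X3 by (intro exI[of _ X] allI impI conjI r) auto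
qed

lemma rp_tends0:
  fixes b :: real
  assumes b: "0 < b" "b < 1/2" and e: "e > 0"
  shows "\<exists>R. \<forall>x\<ge>R. ruin_prob x b \<le> e"
proof -
  obtain X where X: "\<And>x. x > 2 \<Longrightarrow> ruin_prob x b \<le> (if x \<le> X then 1 else log 2 (X-1) / log 2 (x-1))" "X \<ge> 3"
    using rp_decay[OF b] by blast
  define K where "K = log 2 (X-1)"
  have K: "K > 0" using X(2) by (simp add: K_def)
  define R where "R = X + 1 + 2 powr (K/e)"
  show ?thesis
  proof (intro exI allI impI)
    fix x assume x: "R \<le> x"
    have "0 < 2 powr (K/e)" by simp
    then have x2: "x > X" "x > 2" "x - 1 \<ge> 2 powr (K/e)" using X(2) x unfolding R_def by linarith+
    then have "K/e \<le> log 2 (x-1)" by (simp add: le_log_iff)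
    then have "K \<le> e * log 2 (x-1)" using e by (simp add: field_simps)
    moreover have "log 2 (x-1) > 0" using x2 log_less_cancel_iff[of 2 1 "x-1"] by simp
    ultimately have "K / log 2 (x-1) \<le> e" by (simp add: divide_le_eq mult.commute)
    then show "ruin_prob x b \<le> e" using X(1)[OF x2(2)] x2(1) by (simp add: K_def)
  qed
qed

definition sol :: "real \<Rightarrow> (real \<Rightarrow> real) \<Rightarrow> bool" where
  "sol p \<phi> \<longleftrightarrow> (\<forall>x\<le>2. \<phi> x = 1) \<and> (\<forall>x>2. \<phi> x = p * \<phi> ((x+1)/2) + (1-p) * \<phi> (2*x-2))
     \<and> (\<forall>x y. x \<le> y \<longrightarrow> \<phi> y \<le> \<phi> x) \<and> (\<forall>x. 0 \<le> \<phi> x) \<and> (\<forall>e>0. \<exists>R. \<forall>x\<ge>R. \<phi> x \<le> e)"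

lemma sol_le2: "sol p \<phi> \<Longrightarrow> x \<le> 2 \<Longrightarrow> \<phi> x = 1"
  unfolding sol_def by blast
lemma sol_eq: "sol p \<phi> \<Longrightarrow> x > 2 \<Longrightarrow> \<phi> x = p * \<phi> ((x+1)/2) + (1-p) * \<phi> (2*x-2)"
  unfolding sol_def by blast
lemma sol_anti: "sol p \<phi> \<Longrightarrow> x \<le> y \<Longrightarrow> \<phi> y \<le> \<phi> x"
  unfolding sol_def by blast
lemma sol_nonneg: "sol p \<phi> \<Longrightarrow> 0 \<le> \<phi> x"
  unfolding sol_def by blast
lemma sol_tail: "sol p \<phi> \<Longrightarrow> e > 0 \<Longrightarrow> \<exists>R. \<forall>x\<ge>R. \<phi> x \<le> e"
  unfolding sol_def by blast
lemma sol_le1: "sol p \<phi> \<Longrightarrow> \<phi> x \<le> 1"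
  using sol_anti[of p \<phi> "min x 2" x] sol_le2[of p \<phi> "min x 2"] by simp

lemma max_principle:
  fixes w :: "real \<Rightarrow> real"
  assumes p: "0 \<le> p" "p < 1"
    and le2: "\<forall>x\<le>2. w x \<le> 0"
    and sub: "\<forall>x>2. w x \<le> p * w ((x+1)/2) + (1-p) * w (2*x-2)"
    and tail: "\<forall>e>0. \<exists>R. \<forall>x\<ge>R. w x < e"
    and xs: "\<forall>y. w y \<le> w xs"
  shows "w xs \<le> 0"
proof (rule ccontr)
  assume "\<not> w xs \<le> 0"
  then have m: "w xs > 0" by simp
  have xs2: "xs > 2"
  proof (rule ccontr)
    assume "\<not> xs > 2"
    then have "xs \<le> 2" by simp
    then have "w xs \<le> 0" using le2 by blast
    then show False using m by simp
  qed
  have k: "w (2 + 2^k * (xs - 2)) = w xs" for k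
  proof (induction k)
    case 0 then show ?case by simp
  next
    case (Suc k)
    let ?y = "2 + 2^k * (xs - 2)"
    have y2: "?y > 2" using xs2 by simp
    have hy: "2 * ?y - 2 = 2 + 2^Suc k * (xs - 2)" by (simp add: algebra_simps)
    have "w ?y \<le> p * w ((?y+1)/2) + (1-p) * w (2*?y-2)" using sub y2 by blast
    then have "w xs \<le> p * w ((?y+1)/2) + (1-p) * w (2*?y-2)" using Suc.IH by linarith
    also have "\<dots> \<le> p * w xs + (1-p) * w (2*?y-2)" using xs p by (intro add_mono mult_left_mono) auto
    finally have "(1-p) * w xs \<le> (1-p) * w (2*?y-2)" by (simp add: algebra_simps)
    then have "w xs \<le> w (2*?y-2)" using p by simp
    then show ?case using xs hy by (metis order_antisym)
  qed
  obtain R where R: "\<forall>x\<ge>R. w x < w xs" using tail m by blast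
  obtain n where n: "R / (xs - 2) < 2^n" using real_arch_pow[of 2 "R / (xs-2)"] by auto
  have "R < 2^n * (xs - 2)" using n xs2 by (simp add: divide_less_eq)
  then have "w (2 + 2^n * (xs - 2)) < w xs" using R by simp
  then show False using k[of n] by simp
qed

lemma sol_near2:
  assumes p: "0 < p" "p < 1" and s: "sol p \<phi>"
  shows "0 < \<eta> \<Longrightarrow> \<eta> \<le> 1/2^k \<Longrightarrow> 1 - \<phi> (2 + \<eta>) \<le> (1-p)^k"
proof (induction k arbitrary: \<eta>)
  case 0
  then show ?case using sol_nonneg[OF s] by simp
next
  case (Suc k)
  have eq: "\<phi> (2+\<eta>) = p * \<phi> ((2+\<eta>+1)/2) + (1-p) * \<phi> (2*(2+\<eta>)-2)" using sol_eq[OF s, of "2+\<eta>"] Suc.prems by simp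
  have pk: "(1::real)/2^k \<le> 1" by simp
  have ps: "(1::real)/2^Suc k = (1/2^k)/2" by simp
  have e2: "2*\<eta> \<le> 1/2^k" using Suc.prems(2) by (simp add: field_simps)
  have "\<eta> \<le> 1" using e2 pk Suc.prems(1) by linarith
  then have "\<phi> ((2+\<eta>+1)/2) = 1" using sol_le2[OF s] by simp
  moreover have "2*(2+\<eta>)-2 = 2 + 2*\<eta>" by simp
  ultimately have "1 - \<phi> (2+\<eta>) = (1-p) * (1 - \<phi> (2 + 2*\<eta>))" using eq by (simp add: algebra_simps)
  also have "\<dots> \<le> (1-p) * (1-p)^k"
    using Suc.IH[of "2*\<eta>"] e2 Suc.prems(1) p by (intro mult_left_mono) auto
  finally show ?case by simp
qed

locale solctx =
  fixes p :: real and \<phi> :: "real \<Rightarrow> real"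
  assumes p: "0 < p" "p < 1" and s: "sol p \<phi>"
begin

definition D :: "real \<Rightarrow> real \<Rightarrow> real" where "D \<delta> x = \<phi> (x - \<delta>) - \<phi> (x + \<delta>)"
definition J :: "real \<Rightarrow> real" where "J x = (INF \<delta>\<in>{0<..}. D \<delta> x)"

lemma D_nonneg: "0 \<le> \<delta> \<Longrightarrow> 0 \<le> D \<delta> x"
  unfolding D_def using sol_anti[OF s, of "x-\<delta>" "x+\<delta>"] by simp

lemma D_mono: "0 \<le> \<delta> \<Longrightarrow> \<delta> \<le> \<delta>' \<Longrightarrow> D \<delta> x \<le> D \<delta>' x"
  unfolding D_def using sol_anti[OF s, of "x-\<delta>'" "x-\<delta>"] sol_anti[OF s, of "x+\<delta>" "x+\<delta>'"] by simp

lemma bdd: "bdd_below ((\<lambda>\<delta>. D \<delta> x) ` {0<..})"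
  by (rule bdd_belowI[of _ 0]) (auto intro: D_nonneg)

lemma J_le: "0 < \<delta> \<Longrightarrow> J x \<le> D \<delta> x"
  unfolding J_def by (rule cINF_lower[OF bdd]) simp

lemma J_nonneg: "0 \<le> J x"
  unfolding J_def by (rule cINF_greatest) (auto intro: D_nonneg)

lemma J_approx: "0 < e \<Longrightarrow> \<exists>\<delta>>0. D \<delta> x < J x + e"
proof -
  assume e: "0 < e"
  have "J x < J x + e" using e by simp
  then have "\<exists>\<delta>\<in>{0<..}. D \<delta> x < J x + e"
    unfolding J_def[of x] by (subst (asm) cINF_less_iff[OF _ bdd]) auto
  then show ?thesis by auto
qed

lemma J_sub: "x > 2 \<Longrightarrow> J x \<le> p * J ((x+1)/2) + (1-p) * J (2*x-2)"
proof (rule field_le_epsilon)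
  fix e :: real assume x: "x > 2" and e: "0 < e"
  obtain \<delta>1 where d1: "\<delta>1 > 0" "D \<delta>1 ((x+1)/2) < J ((x+1)/2) + e" using J_approx[OF e] by blast
  obtain \<delta>2 where d2: "\<delta>2 > 0" "D \<delta>2 (2*x-2) < J (2*x-2) + e" using J_approx[OF e] by blast
  define \<delta> where "\<delta> = min (min (2*\<delta>1) (\<delta>2/2)) ((x-2)/2)"
  have dpos: "\<delta> > 0" using d1 d2 x by (simp add: \<delta>_def)
  have m3: "\<delta> \<le> (x-2)/2" unfolding \<delta>_def by (rule min.cobounded2)
  have m1: "\<delta> \<le> 2*\<delta>1" "\<delta> \<le> \<delta>2/2" unfolding \<delta>_def by (simp_all add: min.coboundedI1)
  have "x - (x-2)/2 > 2" using x by (simp add: field_simps)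
  then have dle: "\<delta>/2 \<le> \<delta>1" "2*\<delta> \<le> \<delta>2" "x - \<delta> > 2" using m1 m3 by linarith+
  have a1: "(x-\<delta>+1)/2 = (x+1)/2 - \<delta>/2" "2*(x-\<delta>)-2 = (2*x-2) - 2*\<delta>"
    "(x+\<delta>+1)/2 = (x+1)/2 + \<delta>/2" "2*(x+\<delta>)-2 = (2*x-2) + 2*\<delta>" by (simp_all add: field_simps)
  have e1: "\<phi> (x-\<delta>) = p * \<phi> ((x+1)/2 - \<delta>/2) + (1-p) * \<phi> ((2*x-2) - 2*\<delta>)"
    using sol_eq[OF s dle(3)] by (simp only: a1)
  have e2: "\<phi> (x+\<delta>) = p * \<phi> ((x+1)/2 + \<delta>/2) + (1-p) * \<phi> ((2*x-2) + 2*\<delta>)"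
    using sol_eq[OF s, of "x+\<delta>"] dpos x by (simp only: a1)
  have "D \<delta> x = p * D (\<delta>/2) ((x+1)/2) + (1-p) * D (2*\<delta>) (2*x-2)"
    unfolding D_def e1 e2 by (simp add: algebra_simps)
  also have "\<dots> \<le> p * (J ((x+1)/2) + e) + (1-p) * (J (2*x-2) + e)"
  proof (intro add_mono mult_left_mono)
    have "D (\<delta>/2) ((x+1)/2) \<le> D \<delta>1 ((x+1)/2)" by (rule D_mono) (use dle dpos in auto)
    then show "D (\<delta>/2) ((x+1)/2) \<le> J ((x+1)/2) + e" using d1 by linarith
    have "D (2*\<delta>) (2*x-2) \<le> D \<delta>2 (2*x-2)" by (rule D_mono) (use dle dpos in auto)
    then show "D (2*\<delta>) (2*x-2) \<le> J (2*x-2) + e" using d2 by linarith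
  qed (use p in auto)
  also have "\<dots> = p * J ((x+1)/2) + (1-p) * J (2*x-2) + e" by (simp add: algebra_simps)
  finally show "J x \<le> p * J ((x+1)/2) + (1-p) * J (2*x-2) + e" using J_le[OF dpos, of x] by simp
qed

lemma J_le2: "x \<le> 2 \<Longrightarrow> J x \<le> 0"
proof -
  assume x: "x \<le> 2"
  show ?thesis
  proof (cases "x < 2")
    case True
    have "D (2-x) x = 0" unfolding D_def using sol_le2[OF s, of "x-(2-x)"] sol_le2[OF s, of "x+(2-x)"] x by simp
    then show ?thesis using J_le[of "2-x" x] True by simp
  next
    case False
    then have x2: "x = 2" using x by simp
    show ?thesis
    proof (rule ccontr)
      assume "\<not> J x \<le> 0"
      then have "0 < J 2" using x2 by simp
      moreover have "1 - p < 1" using p by simp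
      ultimately obtain k where k: "(1-p)^k < J 2" using real_arch_pow_inv by blast
      have "J 2 \<le> D (1/2^k) 2" by (rule J_le) simp
      also have "\<dots> = 1 - \<phi> (2 + 1/2^k)" unfolding D_def using sol_le2[OF s, of "2 - 1/2^k"] by simp
      also have "\<dots> \<le> (1-p)^k" by (rule sol_near2[OF p s]) auto
      finally show False using k by simp
    qed
  qed
qed

lemma J_tail: "0 < e \<Longrightarrow> \<exists>R. \<forall>x\<ge>R. J x < e"
proof -
  assume e: "0 < e"
  obtain R where R: "\<forall>x\<ge>R. \<phi> x \<le> e/2" using sol_tail[OF s, of "e/2"] e by auto
  show ?thesis
  proof (intro exI allI impI)
    fix x assume "R + 1 \<le> x"
    then have "\<phi> (x-1) \<le> e/2" using R by simp
    moreover have "J x \<le> D 1 x" by (rule J_le) simp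
    moreover have "0 \<le> \<phi> (x+1)" by (rule sol_nonneg[OF s])
    ultimately show "J x < e" using e by (simp add: D_def)
  qed
qed

lemma sum_D:
  assumes d: "\<delta> > 0"
  shows "finite A \<Longrightarrow> (\<forall>x\<in>A. \<forall>y\<in>A. x < y \<longrightarrow> 2*\<delta> \<le> y - x) \<Longrightarrow> (\<forall>x\<in>A. x + \<delta> \<le> t)
    \<Longrightarrow> (\<Sum>x\<in>A. D \<delta> x) \<le> 1 - \<phi> t"
proof (induction A arbitrary: t rule: finite_linorder_max_induct)
  case empty then show ?case using sol_le1[OF s, of t] by simp
next
  case (insert b A)
  have bA: "b \<notin> A" using insert.hyps(2) by auto
  have "(\<Sum>x\<in>A. D \<delta> x) \<le> 1 - \<phi> (b - \<delta>)"
  proof (rule insert.IH)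
    show "\<forall>x\<in>A. \<forall>y\<in>A. x < y \<longrightarrow> 2*\<delta> \<le> y - x" using insert.prems(1) by blast
    show "\<forall>x\<in>A. x + \<delta> \<le> b - \<delta>" using insert.prems(1) insert.hyps(2) by force
  qed
  moreover have "\<phi> t \<le> \<phi> (b + \<delta>)" using insert.prems(2) by (intro sol_anti[OF s]) simp
  ultimately show ?case using insert.hyps(1) bA by (simp add: D_def)
qed

lemma count:
  assumes e: "0 < e" and A: "finite A" "\<forall>x\<in>A. e \<le> J x"
  shows "real (card A) * e \<le> 1"
proof -
  define G where "G = (\<lambda>(x,y). (y-x)/2) ` {(x,y). x \<in> A \<and> y \<in> A \<and> x < y}"
  have finG: "finite G" unfolding G_def
    by (rule finite_imageI, rule finite_subset[of _ "A \<times> A"]) (use A in auto)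
  define \<delta> where "\<delta> = Min (insert 1 G)"
  have dpos: "\<delta> > 0" unfolding \<delta>_def using finG by (subst Min_gr_iff) (auto simp: G_def)
  have gap: "\<forall>x\<in>A. \<forall>y\<in>A. x < y \<longrightarrow> 2*\<delta> \<le> y - x"
  proof (intro ballI impI)
    fix x y assume "x \<in> A" "y \<in> A" "x < y"
    then have "(y-x)/2 \<in> insert 1 G" by (auto simp: G_def)
    then have "\<delta> \<le> (y-x)/2" unfolding \<delta>_def using finG by (intro Min_le) auto
    then show "2*\<delta> \<le> y - x" by simp
  qed
  define t where "t = Max (insert 0 A) + \<delta>"
  have tA: "\<forall>x\<in>A. x + \<delta> \<le> t" unfolding t_def using A by auto
  have "real (card A) * e = (\<Sum>x\<in>A. e)" by simp
  also have "\<dots> \<le> (\<Sum>x\<in>A. J x)" using A by (intro sum_mono) auto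
  also have "\<dots> \<le> (\<Sum>x\<in>A. D \<delta> x)" using J_le[OF dpos] by (intro sum_mono) auto
  also have "\<dots> \<le> 1 - \<phi> t" by (rule sum_D[OF dpos A(1) gap tA])
  also have "\<dots> \<le> 1" using sol_nonneg[OF s, of t] by simp
  finally show ?thesis .
qed

lemma finJ: "0 < e \<Longrightarrow> finite {x. e \<le> J x}"
proof (rule ccontr)
  assume e: "0 < e" and inf: "infinite {x. e \<le> J x}"
  obtain n :: nat where n: "1 < real n * e" using ex_less_of_nat_mult[OF e] by blast
  obtain B where B: "finite B" "card B = n" "B \<subseteq> {x. e \<le> J x}" using infinite_arbitrarily_large[OF inf] by blast
  have "real (card B) * e \<le> 1" using count[OF e B(1)] B(3) by blast
  then show False using n B(2) by simp
qed

lemma J_zero: "J x = 0"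
proof (rule ccontr)
  assume "J x \<noteq> 0"
  then have J0: "0 < J x" using J_nonneg[of x] by simp
  define S where "S = {y. J x \<le> J y}"
  have finS: "finite S" unfolding S_def by (rule finJ[OF J0])
  have xS: "x \<in> S" by (simp add: S_def)
  then have neS: "J ` S \<noteq> {}" by auto
  obtain xs where xs: "xs \<in> S" "J xs = Max (J ` S)" using Max_in[OF finite_imageI[OF finS] neS] by auto
  have allle: "\<forall>y. J y \<le> J xs"
  proof
    fix y show "J y \<le> J xs"
    proof (cases "y \<in> S")
      case True then show ?thesis using xs finS by simp
    next
      case False then have "J y < J x" by (simp add: S_def)
      moreover have "J x \<le> J xs" using xs(1) by (simp add: S_def)
      ultimately show ?thesis by simp
    qed
  qed
  have "J xs \<le> 0"
    by (rule max_principle[of p J xs]) (use p J_le2 J_sub J_tail allle in auto)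
  moreover have "J x \<le> J xs" using xs(1) by (simp add: S_def)
  ultimately show False using J0 by simp
qed

lemma cont: "isCont \<phi> x"
  unfolding isCont_def LIM_eq
proof (intro allI impI)
  fix r :: real assume r: "0 < r"
  obtain \<delta> where d: "\<delta> > 0" "D \<delta> x < r" using J_approx[OF r, of x] J_zero[of x] by auto
  show "\<exists>s>0. \<forall>y. y \<noteq> x \<and> norm (y - x) < s \<longrightarrow> norm (\<phi> y - \<phi> x) < r"
  proof (intro exI conjI allI impI)
    fix y assume y: "y \<noteq> x \<and> norm (y - x) < \<delta>"
    then have "x - \<delta> \<le> y" "y \<le> x + \<delta>" by auto
    then have "\<phi> (x+\<delta>) \<le> \<phi> y" "\<phi> y \<le> \<phi> (x-\<delta>)" using sol_anti[OF s] by auto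
    moreover have "\<phi> (x+\<delta>) \<le> \<phi> x" "\<phi> x \<le> \<phi> (x-\<delta>)" using sol_anti[OF s] d by auto
    ultimately show "norm (\<phi> y - \<phi> x) < r" using d by (simp add: D_def abs_if)
  qed (use d in simp)
qed

end

lemma sol_cont: "0 < p \<Longrightarrow> p < 1 \<Longrightarrow> sol p \<phi> \<Longrightarrow> isCont \<phi> x"
  using solctx.cont solctx.intro by blast

lemma rp_sol: "0 < p \<Longrightarrow> p < 1/2 \<Longrightarrow> sol p (\<lambda>x. ruin_prob x p)"
  unfolding sol_def
proof (intro conjI allI impI)
  assume p: "0 < p" "p < 1/2"
  show "ruin_prob x p = 1" if "x \<le> 2" for x using rp_le2[of p x] p that by simp
  show "ruin_prob x p = p * ruin_prob ((x+1)/2) p + (1-p) * ruin_prob (2*x-2) p" if "x > 2" for x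
    using rp_eq[of p x] p that by simp
  show "ruin_prob y p \<le> ruin_prob x p" if "x \<le> y" for x y using rp_antimono[of p x y] p that by simp
  show "0 \<le> ruin_prob x p" for x using rp_bounds[of p x] p by simp
  show "\<exists>R. \<forall>x\<ge>R. ruin_prob x p \<le> e" if "e > 0" for e using rp_tends0[of p e] p that by simp
qed

lemma uniq_le:
  assumes p: "0 < p" "p < 1" and s1: "sol p \<phi>1" and s2: "sol p \<phi>2"
  shows "\<phi>1 x0 \<le> \<phi>2 x0"
proof (rule ccontr)
  define w where "w x = \<phi>1 x - \<phi>2 x" for x
  assume "\<not> \<phi>1 x0 \<le> \<phi>2 x0"
  then have w0: "w x0 > 0" by (simp add: w_def)
  have wc: "isCont w x" for x unfolding w_def using sol_cont[OF p s1] sol_cont[OF p s2] by (intro continuous_intros)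
  have w2: "w x = 0" if "x \<le> 2" for x using sol_le2[OF s1 that] sol_le2[OF s2 that] by (simp add: w_def)
  have x02: "x0 > 2" using w0 w2[of x0] by force
  have wsub: "\<forall>x>2. w x \<le> p * w ((x+1)/2) + (1-p) * w (2*x-2)"
  proof (intro allI impI)
    fix x :: real assume x: "x > 2"
    show "w x \<le> p * w ((x+1)/2) + (1-p) * w (2*x-2)"
      unfolding w_def sol_eq[OF s1 x] sol_eq[OF s2 x] by (simp add: algebra_simps)
  qed
  have wtail: "\<forall>e>0. \<exists>R. \<forall>x\<ge>R. w x < e"
  proof (intro allI impI)
    fix e :: real assume e: "e > 0"
    obtain R where R: "\<forall>x\<ge>R. \<phi>1 x \<le> e/2" using sol_tail[OF s1, of "e/2"] e by auto
    show "\<exists>R. \<forall>x\<ge>R. w x < e"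
    proof (intro exI allI impI)
      fix x assume "R \<le> x"
      then have "\<phi>1 x \<le> e/2" using R by blast
      moreover have "0 \<le> \<phi>2 x" by (rule sol_nonneg[OF s2])
      ultimately show "w x < e" using e unfolding w_def by linarith
    qed
  qed
  obtain R where R: "\<forall>x\<ge>R. w x < w x0" using wtail w0 by blast
  define R' where "R' = max R (x0 + 1)"
  have "\<exists>xs\<in>{2..R'}. \<forall>y\<in>{2..R'}. w y \<le> w xs"
    by (rule continuous_attains_sup) (use x02 wc in \<open>auto simp: R'_def intro!: continuous_at_imp_continuous_on\<close>)
  then obtain xs where xs: "xs \<in> {2..R'}" "\<forall>y\<in>{2..R'}. w y \<le> w xs" by blast
  have x0in: "x0 \<in> {2..R'}" using x02 by (simp add: R'_def)
  have glob: "\<forall>y. w y \<le> w xs"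
  proof
    fix y
    show "w y \<le> w xs"
    proof (cases "y < 2")
      case True
      then have "w y = w 2" using w2[of y] w2[of 2] by simp
      then show ?thesis using xs(2)[rule_format, of 2] xs(1) by auto
    next
      case False
      show ?thesis
      proof (cases "y \<le> R'")
        case True then show ?thesis using xs(2) False by simp
      next
        case False
        then have "w y < w x0" using R by (simp add: R'_def)
        moreover have "w x0 \<le> w xs" using xs(2) x0in by blast
        ultimately show ?thesis by simp
      qed
    qed
  qed
  have "w xs \<le> 0" by (rule max_principle[of p w xs]) (use p w2 wsub wtail glob in auto)
  moreover have "w x0 \<le> w xs" using xs(2) x0in by blast
  ultimately show False using w0 by simp
qed

lemma uniq: "0 < p \<Longrightarrow> p < 1 \<Longrightarrow> sol p \<phi>1 \<Longrightarrow> sol p \<phi>2 \<Longrightarrow> \<phi>1 x = \<phi>2 x"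
  using uniq_le[of p \<phi>1 \<phi>2 x] uniq_le[of p \<phi>2 \<phi>1 x] by simp

lemma limit_sol:
  fixes q :: "nat \<Rightarrow> real" and p0 :: real and \<phi> :: "real \<Rightarrow> real"
  assumes q: "\<And>n. 0 < q n" "\<And>n. q n < 1/2" "q \<longlonglongrightarrow> p0"
    and lim: "\<And>x. (\<lambda>n. ruin_prob x (q n)) \<longlonglongrightarrow> \<phi> x"
    and tail: "\<forall>e>0. \<exists>R. \<forall>x\<ge>R. \<phi> x \<le> e"
  shows "sol p0 \<phi>"
  unfolding sol_def
proof (intro conjI allI impI)
  have q1: "q n < 1" for n using q(2)[of n] by simp
  show "\<phi> x = 1" if "x \<le> 2" for x
  proof -
    have "(\<lambda>n. ruin_prob x (q n)) = (\<lambda>n. 1)"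
    proof (rule ext)
      fix n show "ruin_prob x (q n) = 1" using rp_le2[of "q n" x] q(1)[of n] q1[of n] that by simp
    qed
    then show ?thesis using lim[of x] LIMSEQ_unique by (metis tendsto_const)
  qed
  show "\<phi> x = p0 * \<phi> ((x+1)/2) + (1-p0) * \<phi> (2*x-2)" if "x > 2" for x
  proof -
    have "(\<lambda>n. ruin_prob x (q n)) = (\<lambda>n. q n * ruin_prob ((x+1)/2) (q n) + (1 - q n) * ruin_prob (2*x-2) (q n))"
    proof (rule ext)
      fix n show "ruin_prob x (q n) = q n * ruin_prob ((x+1)/2) (q n) + (1 - q n) * ruin_prob (2*x-2) (q n)"
        using rp_eq[of "q n" x] q(1)[of n] q1[of n] that by simp
    qed
    moreover have "(\<lambda>n. q n * ruin_prob ((x+1)/2) (q n) + (1 - q n) * ruin_prob (2*x-2) (q n))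
        \<longlonglongrightarrow> p0 * \<phi> ((x+1)/2) + (1-p0) * \<phi> (2*x-2)"
      by (intro tendsto_intros q lim)
    ultimately show ?thesis using lim[of x] LIMSEQ_unique by metis
  qed
  show "\<phi> y \<le> \<phi> x" if "x \<le> y" for x y
    by (rule LIMSEQ_le[OF lim lim]) (use rp_antimono q(1) q1 that in \<open>auto intro!: exI[of _ 0]\<close>)
  show "0 \<le> \<phi> x" for x
  proof (rule LIMSEQ_le_const[OF lim], intro exI[of _ 0] allI impI)
    fix n :: nat
    have "0 \<le> q n" "q n \<le> 1" using q(1)[of n] q1[of n] by auto
    then show "0 \<le> ruin_prob x (q n)" using rp_bounds by blast
  qed
  show "\<exists>R. \<forall>x\<ge>R. \<phi> x \<le> e" if "e > 0" for e using tail that by blast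
qed


lemma rp_cont_p:
  assumes p0: "0 < p0" "p0 < 1/2"
  shows "isCont (\<lambda>p. ruin_prob x p) p0"
proof -
  define iv where "iv n = inverse (real (Suc (Suc n)))" for n
  have iv: "iv \<longlonglongrightarrow> 0" unfolding iv_def by (rule LIMSEQ_Suc[OF LIMSEQ_inverse_real_of_nat])
  have iv01: "0 < iv n" "iv n \<le> 1/2" for n unfolding iv_def by (auto simp: field_simps)
  have ivdec: "iv (Suc n) \<le> iv n" for n unfolding iv_def by (simp add: field_simps)
  define qd where "qd n = p0 + (1/2 - p0) * iv n" for n
  define qu where "qu n = p0 - p0 * iv n" for n
  have qd: "0 < qd n" "qd n < 1/2" "p0 < qd n" for n
  proof -
    have A: "(1/2 - p0) * iv n \<le> (1/2 - p0) * (1/2)" using iv01[of n] p0 by (intro mult_left_mono) auto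
    have B: "0 < (1/2 - p0) * iv n" using iv01[of n] p0 by simp
    show "0 < qd n" using A B p0 unfolding qd_def by (simp add: algebra_simps)
    show "qd n < 1/2" using A B p0 unfolding qd_def by (simp add: algebra_simps)
    show "p0 < qd n" using A B p0 unfolding qd_def by (simp add: algebra_simps)
  qed
  have qu: "0 < qu n" "qu n < 1/2" "qu n < p0" for n
  proof -
    have A: "p0 * iv n \<le> p0 * (1/2)" using iv01[of n] p0 by (intro mult_left_mono) auto
    have B: "0 < p0 * iv n" using iv01[of n] p0 by simp
    show "0 < qu n" using A B p0 unfolding qu_def by (simp add: algebra_simps)
    show "qu n < 1/2" using A B p0 unfolding qu_def by (simp add: algebra_simps)
    show "qu n < p0" using A B p0 unfolding qu_def by (simp add: algebra_simps)
  qed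
  have qdlim: "qd \<longlonglongrightarrow> p0" unfolding qd_def using tendsto_add[OF tendsto_const tendsto_mult[OF tendsto_const iv]] by simp
  have qulim: "qu \<longlonglongrightarrow> p0" unfolding qu_def using tendsto_diff[OF tendsto_const tendsto_mult[OF tendsto_const iv]] by simp
  have qddec: "decseq qd" unfolding decseq_Suc_iff qd_def using ivdec p0 by (intro allI add_left_mono mult_left_mono) auto
  have quinc: "incseq qu" unfolding incseq_Suc_iff qu_def using ivdec p0 by (auto intro: mult_left_mono)
  have rp_sol0: "sol p0 (\<lambda>x. ruin_prob x p0)" using rp_sol p0 by simp
  have dlim: "(\<lambda>n. ruin_prob y (qd n)) \<longlonglongrightarrow> ruin_prob y p0" for y
  proof -
    define \<phi> where "\<phi> y = (INF n. ruin_prob y (qd n))" for y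
    have dec: "decseq (\<lambda>n. ruin_prob y (qd n))" for y
      unfolding decseq_def
    proof (intro allI impI)
      fix m n :: nat assume "m \<le> n"
      then have "qd n \<le> qd m" using qddec by (simp add: decseq_def)
      moreover have "0 < qd n" "qd m < 1" using qd[of n] qd[of m] by auto
      ultimately show "ruin_prob y (qd n) \<le> ruin_prob y (qd m)" by (intro rp_mono_p) auto
    qed
    have bdd: "bdd_below (range (\<lambda>n. ruin_prob y (qd n)))" for y
    proof (intro bdd_belowI[of _ 0])
      fix z assume "z \<in> range (\<lambda>n. ruin_prob y (qd n))"
      then obtain n where "z = ruin_prob y (qd n)" by auto
      moreover have "0 \<le> qd n" "qd n \<le> 1" using qd[of n] by auto
      ultimately show "0 \<le> z" using rp_bounds by blast
    qed
    have lim: "(\<lambda>n. ruin_prob y (qd n)) \<longlonglongrightarrow> \<phi> y" for y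
      unfolding \<phi>_def by (rule LIMSEQ_decseq_INF[OF bdd dec])
    have tl: "\<forall>e>0. \<exists>R. \<forall>x\<ge>R. \<phi> x \<le> e"
    proof (intro allI impI)
      fix e :: real assume e: "e > 0"
      obtain R where R: "\<forall>x\<ge>R. ruin_prob x (qd 0) \<le> e" using rp_tends0[OF qd(1,2) e] by blast
      have "\<phi> x \<le> ruin_prob x (qd 0)" for x unfolding \<phi>_def by (rule cINF_lower[OF bdd]) simp
      then show "\<exists>R. \<forall>x\<ge>R. \<phi> x \<le> e" using R by (meson order_trans)
    qed
    have "sol p0 \<phi>" by (rule limit_sol[OF qd(1,2) qdlim lim tl])
    then have "\<phi> y = ruin_prob y p0" using uniq[OF p0(1) _ _ rp_sol0] p0 by simp
    then show ?thesis using lim[of y] by simp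
  qed
  have ulim: "(\<lambda>n. ruin_prob y (qu n)) \<longlonglongrightarrow> ruin_prob y p0" for y
  proof -
    define \<phi> where "\<phi> y = (SUP n. ruin_prob y (qu n))" for y
    have inc: "incseq (\<lambda>n. ruin_prob y (qu n))" for y
      unfolding incseq_def
    proof (intro allI impI)
      fix m n :: nat assume "m \<le> n"
      then have "qu m \<le> qu n" using quinc by (simp add: incseq_def)
      moreover have "0 < qu m" "qu n < 1" using qu[of n] qu[of m] by auto
      ultimately show "ruin_prob y (qu m) \<le> ruin_prob y (qu n)" by (intro rp_mono_p) auto
    qed
    have bdd: "bdd_above (range (\<lambda>n. ruin_prob y (qu n)))" for y
    proof (intro bdd_aboveI[of _ 1])
      fix z assume "z \<in> range (\<lambda>n. ruin_prob y (qu n))"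
      then obtain n where "z = ruin_prob y (qu n)" by auto
      moreover have "0 \<le> qu n" "qu n \<le> 1" using qu[of n] by auto
      ultimately show "z \<le> 1" using rp_bounds by blast
    qed
    have lim: "(\<lambda>n. ruin_prob y (qu n)) \<longlonglongrightarrow> \<phi> y" for y
      unfolding \<phi>_def by (rule LIMSEQ_incseq_SUP[OF bdd inc])
    have tl: "\<forall>e>0. \<exists>R. \<forall>x\<ge>R. \<phi> x \<le> e"
    proof (intro allI impI)
      fix e :: real assume e: "e > 0"
      obtain R where R: "\<forall>x\<ge>R. ruin_prob x p0 \<le> e" using rp_tends0[OF p0 e] by blast
      have "\<phi> x \<le> ruin_prob x p0" for x unfolding \<phi>_def
      proof (rule cSUP_least)
        fix n
        have "0 < qu n" "qu n \<le> p0" "p0 < 1" using qu[of n] p0 by auto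
        then show "ruin_prob x (qu n) \<le> ruin_prob x p0" by (intro rp_mono_p)
      qed simp
      then show "\<exists>R. \<forall>x\<ge>R. \<phi> x \<le> e" using R by (meson order_trans)
    qed
    have "sol p0 \<phi>" by (rule limit_sol[OF qu(1,2) qulim lim tl])
    then have "\<phi> y = ruin_prob y p0" using uniq[OF p0(1) _ _ rp_sol0] p0 by simp
    then show ?thesis using lim[of y] by simp
  qed
  show ?thesis
    unfolding isCont_def LIM_eq
  proof (intro allI impI)
    fix r :: real assume r: "0 < r"
    obtain N1 where N1: "\<forall>n\<ge>N1. norm (ruin_prob x (qd n) - ruin_prob x p0) < r"
      using dlim[of x] r unfolding LIMSEQ_iff by blast
    obtain N2 where N2: "\<forall>n\<ge>N2. norm (ruin_prob x (qu n) - ruin_prob x p0) < r"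
      using ulim[of x] r unfolding LIMSEQ_iff by blast
    define N where "N = max N1 N2"
    have a: "\<bar>ruin_prob x (qd N) - ruin_prob x p0\<bar> < r" "\<bar>ruin_prob x (qu N) - ruin_prob x p0\<bar> < r"
      using N1 N2 by (auto simp: N_def)
    show "\<exists>s>0. \<forall>p. p \<noteq> p0 \<and> norm (p - p0) < s \<longrightarrow> norm (ruin_prob x p - ruin_prob x p0) < r"
    proof (intro exI conjI allI impI)
      show "0 < min (qd N - p0) (p0 - qu N)" using qd[of N] qu[of N] by simp
      fix p assume pp: "p \<noteq> p0 \<and> norm (p - p0) < min (qd N - p0) (p0 - qu N)"
      then have p1: "qu N < p" "p < qd N" by auto
      have "ruin_prob x (qu N) \<le> ruin_prob x p" using p1 qu[of N] qd[of N] by (intro rp_mono_p) auto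
      moreover have "ruin_prob x p \<le> ruin_prob x (qd N)" using p1 qu[of N] qd[of N] by (intro rp_mono_p) auto
      ultimately show "norm (ruin_prob x p - ruin_prob x p0) < r" using a by auto
    qed
  qed
qed

lemma dini_core:
  fixes F :: "nat \<Rightarrow> real \<Rightarrow> real" and G :: "real \<Rightarrow> real"
  assumes anchors: "\<And>e. e > 0 \<Longrightarrow> \<exists>A. finite A \<and> A \<subseteq> U \<and> (\<forall>t\<in>K. \<exists>s\<in>A. (\<forall>n. F n s \<le> F n t) \<and> \<bar>G s - G t\<bar> < e)"
    and conv: "\<And>t. t \<in> U \<Longrightarrow> (\<lambda>n. F n t) \<longlonglongrightarrow> G t"
    and below: "\<And>n t. t \<in> K \<Longrightarrow> F n t \<le> G t"
  shows "uniform_limit K F G sequentially"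
  unfolding uniform_limit_iff
proof (intro allI impI)
  fix e :: real assume e: "e > 0"
  obtain A where A: "finite A" "A \<subseteq> U" "\<forall>t\<in>K. \<exists>s\<in>A. (\<forall>n. F n s \<le> F n t) \<and> \<bar>G s - G t\<bar> < e/2"
    using anchors[of "e/2"] e by auto
  have "\<forall>s\<in>A. \<forall>\<^sub>F n in sequentially. dist (F n s) (G s) < e/2"
  proof
    fix s assume "s \<in> A"
    then have "(\<lambda>n. F n s) \<longlonglongrightarrow> G s" using A(2) conv by blast
    moreover have "e/2 > 0" using e by simp
    ultimately show "\<forall>\<^sub>F n in sequentially. dist (F n s) (G s) < e/2" unfolding tendsto_iff by blast
  qed
  then have ev: "\<forall>\<^sub>F n in sequentially. \<forall>s\<in>A. dist (F n s) (G s) < e/2"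
    by (rule eventually_ball_finite[OF A(1)])
  show "\<forall>\<^sub>F n in sequentially. \<forall>t\<in>K. dist (F n t) (G t) < e"
  proof (rule eventually_mono[OF ev], intro ballI)
    fix n t assume h: "\<forall>s\<in>A. dist (F n s) (G s) < e/2" and t: "t \<in> K"
    obtain s where s: "s \<in> A" "\<forall>n. F n s \<le> F n t" "\<bar>G s - G t\<bar> < e/2" using A(3) t by blast
    have "\<bar>F n s - G s\<bar> < e/2" using h s(1) by (simp add: dist_real_def)
    moreover have "F n t \<le> G t" using below t by blast
    moreover have "F n s \<le> F n t" using s(2) by blast
    ultimately show "dist (F n t) (G t) < e" using s(3) by (simp add: dist_real_def abs_if split: if_splits)
  qed
qed

lemma grid_lower:
  fixes a b h :: real
  assumes ab: "a \<le> b" and h: "h > 0"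
  shows "\<exists>A. finite A \<and> A \<subseteq> {a..b} \<and> (\<forall>t\<in>{a..b}. \<exists>s\<in>A. s \<le> t \<and> t - s < h)"
proof -
  obtain N :: nat where N: "b - a < real N * h" using ex_less_of_nat_mult[OF h] by blast
  define A where "A = (\<lambda>k. a + h * real k) ` {k. k \<le> N \<and> a + h * real k \<le> b}"
  have "finite A" unfolding A_def by simp
  moreover have "A \<subseteq> {a..b}" unfolding A_def using h by auto
  moreover have "\<forall>t\<in>{a..b}. \<exists>s\<in>A. s \<le> t \<and> t - s < h"
  proof
    fix t assume t: "t \<in> {a..b}"
    define Kt where "Kt = {k. k \<le> N \<and> a + h * real k \<le> t}"
    have finK: "finite Kt" unfolding Kt_def by simp
    have K0: "0 \<in> Kt" using t by (simp add: Kt_def)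
    define k where "k = Max Kt"
    have kK: "k \<in> Kt" unfolding k_def using finK K0 by (intro Max_in) auto
    have kN: "k < N"
    proof (rule ccontr)
      assume "\<not> k < N"
      then have "k = N" using kK by (simp add: Kt_def)
      then have "a + h * real N \<le> t" using kK by (simp add: Kt_def)
      then show False using N t by (simp add: algebra_simps)
    qed
    have "Suc k \<notin> Kt" using Max_ge[OF finK, of "Suc k"] unfolding k_def[symmetric] by auto
    then have "t < a + h * real (Suc k)" using kN by (auto simp: Kt_def)
    moreover have "a + h * real k \<le> t" using kK by (simp add: Kt_def)
    moreover have "a + h * real k \<in> A" using kK t unfolding A_def Kt_def by auto
    ultimately show "\<exists>s\<in>A. s \<le> t \<and> t - s < h" by (intro bexI[of _ "a + h * real k"]) (auto simp: algebra_simps)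
  qed
  ultimately show ?thesis by blast
qed

lemma grid_upper:
  fixes a b h :: real
  assumes ab: "a \<le> b" and h: "h > 0"
  shows "\<exists>A. finite A \<and> A \<subseteq> {a..b} \<and> (\<forall>t\<in>{a..b}. \<exists>s\<in>A. t \<le> s \<and> s - t < h)"
proof -
  obtain A where A: "finite A" "A \<subseteq> {-b..-a}" "\<forall>t\<in>{-b..-a}. \<exists>s\<in>A. s \<le> t \<and> t - s < h"
    using grid_lower[of "-b" "-a" h] ab h by auto
  show ?thesis
  proof (intro exI conjI ballI)
    show "finite (uminus ` A)" using A(1) by simp
    show "uminus ` A \<subseteq> {a..b}" using A(2) by auto
    fix t assume t: "t \<in> {a..b}"
    then obtain s where "s \<in> A" "s \<le> -t" "-t - s < h" using A(3) by force
    then show "\<exists>s\<in>uminus ` A. t \<le> s \<and> s - t < h" by (intro bexI[of _ "-s"]) auto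
  qed
qed

lemma compact_interval_hull:
  fixes K :: "real set"
  assumes "compact K" "K \<noteq> {}"
  obtains a b where "a \<in> K" "b \<in> K" "K \<subseteq> {a..b}"
proof -
  obtain a where a: "a \<in> K" "\<forall>t\<in>K. a \<le> t" using compact_attains_inf[OF assms] by blast
  obtain b where b: "b \<in> K" "\<forall>t\<in>K. t \<le> b" using compact_attains_sup[OF assms] by blast
  show ?thesis using a b by (intro that[of a b]) auto
qed

lemma mono_dini:
  fixes F :: "nat \<Rightarrow> real \<Rightarrow> real" and G :: "real \<Rightarrow> real"
  assumes K: "compact K" "K \<subseteq> U"
    and interval: "\<And>a b t. a \<in> U \<Longrightarrow> b \<in> U \<Longrightarrow> a \<le> t \<Longrightarrow> t \<le> b \<Longrightarrow> t \<in> U"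
    and cont: "\<And>t. t \<in> U \<Longrightarrow> isCont G t"
    and conv: "\<And>t. t \<in> U \<Longrightarrow> (\<lambda>n. F n t) \<longlonglongrightarrow> G t"
    and below: "\<And>n t. t \<in> U \<Longrightarrow> F n t \<le> G t"
    and mono: "(\<forall>n s t. s \<in> U \<longrightarrow> t \<in> U \<longrightarrow> s \<le> t \<longrightarrow> F n s \<le> F n t) \<or>
               (\<forall>n s t. s \<in> U \<longrightarrow> t \<in> U \<longrightarrow> s \<le> t \<longrightarrow> F n t \<le> F n s)"
  shows "uniform_limit K F G sequentially"
proof (cases "K = {}")
  case True then show ?thesis by simp
next
  case False
  obtain a b where ab: "a \<in> K" "b \<in> K" "K \<subseteq> {a..b}" using compact_interval_hull[OF K(1) False] by blast
  have aU: "a \<in> U" "b \<in> U" using ab K(2) by auto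
  have sub: "{a..b} \<subseteq> U"
  proof
    fix t assume "t \<in> {a..b}"
    then show "t \<in> U" using interval[OF aU] by simp
  qed
  have uc: "uniformly_continuous_on {a..b} G"
  proof (rule compact_uniformly_continuous)
    show "continuous_on {a..b} G"
      by (rule continuous_at_imp_continuous_on) (use sub cont in blast)
  qed simp
  have aleb: "a \<le> b" using ab by auto
  show ?thesis
  proof (rule dini_core[where U = U])
    show "(\<lambda>n. F n t) \<longlonglongrightarrow> G t" if "t \<in> U" for t using conv that by simp
    show "F n t \<le> G t" if "t \<in> K" for n t using below that K(2) by auto
    fix e :: real assume e: "e > 0"
    obtain d where d: "d > 0" "\<forall>x\<in>{a..b}. \<forall>x'\<in>{a..b}. dist x' x < d \<longrightarrow> dist (G x') (G x) < e"
      using uc e unfolding uniformly_continuous_on_def by meson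
    show "\<exists>A. finite A \<and> A \<subseteq> U \<and> (\<forall>t\<in>K. \<exists>s\<in>A. (\<forall>n. F n s \<le> F n t) \<and> \<bar>G s - G t\<bar> < e)"
      using mono
    proof
      assume inc: "\<forall>n s t. s \<in> U \<longrightarrow> t \<in> U \<longrightarrow> s \<le> t \<longrightarrow> F n s \<le> F n t"
      obtain A where A: "finite A" "A \<subseteq> {a..b}" "\<forall>t\<in>{a..b}. \<exists>s\<in>A. s \<le> t \<and> t - s < d"
        using grid_lower[OF aleb d(1)] by blast
      show ?thesis
      proof (intro exI conjI ballI)
        show "finite A" "A \<subseteq> U" using A sub by auto
        fix t assume t: "t \<in> K"
        then have tab: "t \<in> {a..b}" using ab by auto
        then obtain s where s: "s \<in> A" "s \<le> t" "t - s < d" using A(3) by blast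
        have sab: "s \<in> {a..b}" using s A(2) by auto
        have "dist (G s) (G t) < e" using d(2) tab sab s by (simp add: dist_real_def)
        moreover have "\<forall>n. F n s \<le> F n t" using inc sab tab sub s(2) by blast
        ultimately show "\<exists>s\<in>A. (\<forall>n. F n s \<le> F n t) \<and> \<bar>G s - G t\<bar> < e" using s(1) by (auto simp: dist_real_def)
      qed
    next
      assume dec: "\<forall>n s t. s \<in> U \<longrightarrow> t \<in> U \<longrightarrow> s \<le> t \<longrightarrow> F n t \<le> F n s"
      obtain A where A: "finite A" "A \<subseteq> {a..b}" "\<forall>t\<in>{a..b}. \<exists>s\<in>A. t \<le> s \<and> s - t < d"
        using grid_upper[OF aleb d(1)] by blast
      show ?thesis
      proof (intro exI conjI ballI)
        show "finite A" "A \<subseteq> U" using A sub by auto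
        fix t assume t: "t \<in> K"
        then have tab: "t \<in> {a..b}" using ab by auto
        then obtain s where s: "s \<in> A" "t \<le> s" "s - t < d" using A(3) by blast
        have sab: "s \<in> {a..b}" using s A(2) by auto
        have "dist (G s) (G t) < e" using d(2) tab sab s by (simp add: dist_real_def)
        moreover have "\<forall>n. F n s \<le> F n t" using dec sab tab sub s(2) by blast
        ultimately show "\<exists>s\<in>A. (\<forall>n. F n s \<le> F n t) \<and> \<bar>G s - G t\<bar> < e" using s(1) by (auto simp: dist_real_def)
      qed
    qed
  qed
qed

theorem proposition1p3:
  shows "(\<forall>x::real. x > 2 \<longrightarrow>
            locally_uniform_limit {0<..<1/2} (\<lambda>n p. f_approx n x p) (\<lambda>p. ruin_prob x p))
       \<and> (\<forall>p::real. 0 < p \<and> p < 1/2 \<longrightarrow>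
            locally_uniform_limit {2<..} (\<lambda>n x. f_approx n x p) (\<lambda>x. ruin_prob x p))
       \<and> (\<forall>x p::real. x > 2 \<and> 0 < p \<and> p < 1/2 \<longrightarrow>
            ruin_prob x p = p * ruin_prob ((x + 1) / 2) p + (1 - p) * ruin_prob (2 * x - 2) p)"
proof (intro conjI allI impI)
  fix x :: real assume x: "x > 2"
  show "locally_uniform_limit {0<..<1/2} (\<lambda>n p. f_approx n x p) (\<lambda>p. ruin_prob x p)"
    unfolding locally_uniform_limit_def
  proof (intro allI impI)
    fix K :: "real set" assume K: "compact K \<and> K \<subseteq> {0<..<1/2}"
    show "uniform_limit K (\<lambda>n p. f_approx n x p) (\<lambda>p. ruin_prob x p) sequentially"
    proof (rule mono_dini[where U = "{0<..<1/2}"])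
      show "compact K" "K \<subseteq> {0<..<1/2}" using K by auto
      show "t \<in> {0<..<1/2}" if "a \<in> {0<..<1/2}" "b \<in> {0<..<1/2}" "a \<le> t" "t \<le> b" for a b t :: real
        using that by auto
      show "isCont (\<lambda>p. ruin_prob x p) t" if "t \<in> {0<..<1/2}" for t
        using rp_cont_p that by auto
      show "(\<lambda>n. f_approx n x t) \<longlonglongrightarrow> ruin_prob x t" if "t \<in> {0<..<1/2}" for t
        using fa_lim that by auto
      show "f_approx n x t \<le> ruin_prob x t" if "t \<in> {0<..<1/2}" for n t
        using fa_le_rp that by auto
      show "(\<forall>n s t. s \<in> {0<..<1/2} \<longrightarrow> t \<in> {0<..<1/2} \<longrightarrow> s \<le> t \<longrightarrow> f_approx n x s \<le> f_approx n x t) \<or>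
            (\<forall>n s t. s \<in> {0<..<1/2} \<longrightarrow> t \<in> {0<..<1/2} \<longrightarrow> s \<le> t \<longrightarrow> f_approx n x t \<le> f_approx n x s)"
        by (rule disjI1) (auto intro: fa_mono_p)
    qed
  qed
next
  fix p :: real assume p: "0 < p \<and> p < 1/2"
  show "locally_uniform_limit {2<..} (\<lambda>n x. f_approx n x p) (\<lambda>x. ruin_prob x p)"
    unfolding locally_uniform_limit_def
  proof (intro allI impI)
    fix K :: "real set" assume K: "compact K \<and> K \<subseteq> {2<..}"
    show "uniform_limit K (\<lambda>n x. f_approx n x p) (\<lambda>x. ruin_prob x p) sequentially"
    proof (rule mono_dini[where U = "{2<..}"])
      show "compact K" "K \<subseteq> {2<..}" using K by auto
      show "t \<in> {2<..}" if "a \<in> {2<..}" "b \<in> {2<..}" "a \<le> t" "t \<le> b" for a b t :: real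
        using that by auto
      show "isCont (\<lambda>x. ruin_prob x p) t" if "t \<in> {2<..}" for t
        using sol_cont[of p "\<lambda>x. ruin_prob x p" t] rp_sol[of p] p by auto
      show "(\<lambda>n. f_approx n t p) \<longlonglongrightarrow> ruin_prob t p" if "t \<in> {2<..}" for t
        using fa_lim p by auto
      show "f_approx n t p \<le> ruin_prob t p" if "t \<in> {2<..}" for n t
        using fa_le_rp p by auto
      show "(\<forall>n s t. s \<in> {2<..} \<longrightarrow> t \<in> {2<..} \<longrightarrow> s \<le> t \<longrightarrow> f_approx n s p \<le> f_approx n t p) \<or>
            (\<forall>n s t. s \<in> {2<..} \<longrightarrow> t \<in> {2<..} \<longrightarrow> s \<le> t \<longrightarrow> f_approx n t p \<le> f_approx n s p)"
        by (rule disjI2) (use p in \<open>auto intro: fa_antimono\<close>)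
    qed
  qed
next
  fix x p :: real assume a: "x > 2 \<and> 0 < p \<and> p < 1/2"
  show "ruin_prob x p = p * ruin_prob ((x + 1) / 2) p + (1 - p) * ruin_prob (2 * x - 2) p"
    using rp_eq[of p x] a by simp
qed

end
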